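(* (1) For any poset $P$ and any subset $P_0\subseteq P$ (with the induced order), no isotone map $P_0\to\mathrm{Down}(P)$ is surjective. (2) More strongly, for any poset $P_0$ and any upper semilattice $T$ containing $\mathrm{Down}(P_0)$ as an upper subsemilattice, there is no isotone map $f:P_0\to T$ such that $f(P_0)$ generates $T$ as an upper semilattice.
   Context: For a poset $P$, a downset of $P$ is a subset $d$ with $x\le y\in d\Rightarrow x\in d$. $\mathrm{Down}(P)$ denotes the lattice of all downsets of $P$ (including $\emptyset$), ordered by inclusion, with join given by union. A map of posets is isotone if it preserves $\le$. *)

theory Defs
  imports Main
begin

definition downset :: "'a set \<Rightarrow> 'a rel \<Rightarrow> 'a set \<Rightarrow> bool" where
  "downset P r d \<longleftrightarrow> d \<subseteq> P \<and> (\<forall>x y. (x, y) \<in> r \<and> y \<in> d \<longrightarrow> x \<in> d)"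

definition Down :: "'a set \<Rightarrow> 'a rel \<Rightarrow> 'a set set" where
  "Down P r = {d. downset P r d}"

definition isotone_on :: "'a set \<Rightarrow> 'a rel \<Rightarrow> ('b \<Rightarrow> 'b \<Rightarrow> bool) \<Rightarrow> ('a \<Rightarrow> 'b) \<Rightarrow> bool" where
  "isotone_on A r le f \<longleftrightarrow> (\<forall>x\<in>A. \<forall>y\<in>A. (x, y) \<in> r \<longrightarrow> le (f x) (f y))"

inductive_set sup_generated :: "'b::semilattice_sup set \<Rightarrow> 'b set" for S where
  gen: "x \<in> S \<Longrightarrow> x \<in> sup_generated S"
| join: "x \<in> sup_generated S \<Longrightarrow> y \<in> sup_generated S \<Longrightarrow> sup x y \<in> sup_generated S"

end

theory Submission
  imports Defs
begin

lemma po_facts: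
  assumes "partial_order_on P r"
  shows "r \<subseteq> P \<times> P" "\<And>x. x \<in> P \<Longrightarrow> (x,x) \<in> r" "trans r"
  using assms unfolding partial_order_on_def preorder_on_def refl_on_def by auto

lemma part1:
  assumes po: "partial_order_on P r" and sub: "P0 \<subseteq> P"
    and iso: "isotone_on P0 r (\<subseteq>) f" and img: "f ` P0 \<subseteq> Down P r"
  shows "f ` P0 \<noteq> Down P r"
proof
  assume eq: "f ` P0 = Down P r"
  note pf = po_facts[OF po]
  define D where "D = {x \<in> P. \<exists>y\<in>P0. (x,y) \<in> r \<and> y \<notin> f y}"
  have "downset P r D"
    unfolding downset_def
  proof (intro conjI allI impI)
    show "D \<subseteq> P" unfolding D_def by blast
  next
    fix x z assume xz: "(x, z) \<in> r \<and> z \<in> D"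
    then obtain y where y: "y \<in> P0" "(z,y) \<in> r" "y \<notin> f y" unfolding D_def by blast
    have "(x,y) \<in> r" using transD[OF pf(3)] xz y(2) by blast
    moreover have "x \<in> P" using pf(1) xz by blast
    ultimately show "x \<in> D" unfolding D_def using y by blast
  qed
  then have "D \<in> f ` P0" using eq unfolding Down_def by simp
  then obtain p where p: "p \<in> P0" "f p = D" by (metis imageE)
  show False
  proof (cases "p \<in> f p")
    case True
    then obtain y where y: "y \<in> P0" "(p,y) \<in> r" "y \<notin> f y" using p unfolding D_def by auto
    have "f p \<subseteq> f y" using iso p y unfolding isotone_on_def by auto
    moreover have "y \<in> D" unfolding D_def using y sub pf(2) by auto
    ultimately show False using p y by auto
  next
    case False
    then have "p \<in> D" unfolding D_def using p sub pf(2) by auto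
    then show False using False p by simp
  qed
qed

lemma gen_code:
  assumes "t \<in> sup_generated (f ` P0)"
  shows "\<exists>S. finite S \<and> S \<noteq> {} \<and> S \<subseteq> P0 \<and> (\<forall>s\<in>S. f s \<le> t) \<and>
            (\<forall>u. (\<forall>s\<in>S. f s \<le> u) \<longrightarrow> t \<le> u)"
  using assms
proof (induction rule: sup_generated.induct)
  case (gen x)
  then obtain p where "p \<in> P0" "x = f p" by auto
  then show ?case by (intro exI[of _ "{p}"]) auto
next
  case (join x y)
  then obtain S1 S2 where
    "finite S1 \<and> S1 \<noteq> {} \<and> S1 \<subseteq> P0 \<and> (\<forall>s\<in>S1. f s \<le> x) \<and> (\<forall>u. (\<forall>s\<in>S1. f s \<le> u) \<longrightarrow> x \<le> u)"
    "finite S2 \<and> S2 \<noteq> {} \<and> S2 \<subseteq> P0 \<and> (\<forall>s\<in>S2. f s \<le> y) \<and> (\<forall>u. (\<forall>s\<in>S2. f s \<le> u) \<longrightarrow> y \<le> u)"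
    by blast
  then show ?case
    by (intro exI[of _ "S1 \<union> S2"]) (auto intro: le_supI1 le_supI2)
qed

lemma part2:
  fixes e :: "'c set \<Rightarrow> 'b::semilattice_sup" and f :: "'c \<Rightarrow> 'b"
  assumes po: "partial_order_on P0 r0"
    and inj: "inj_on e (Down P0 r0)"
    and hom: "\<forall>A\<in>Down P0 r0. \<forall>B\<in>Down P0 r0. e (A \<union> B) = sup (e A) (e B)"
    and iso: "isotone_on P0 r0 (\<le>) f"
  shows "sup_generated (f ` P0) \<noteq> UNIV"
proof
  assume gen: "sup_generated (f ` P0) = UNIV"
  note pf = po_facts[OF po]
  have unD: "A \<union> B \<in> Down P0 r0" if "A \<in> Down P0 r0" "B \<in> Down P0 r0" for A B
    using that unfolding Down_def downset_def by auto
  have emb: "A \<subseteq> B \<longleftrightarrow> e A \<le> e B" if A: "A \<in> Down P0 r0" and B: "B \<in> Down P0 r0" for A B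
  proof
    assume "A \<subseteq> B"
    then have "A \<union> B = B" by auto
    then have "e B = sup (e A) (e B)" using hom A B by metis
    then show "e A \<le> e B" by (metis sup.cobounded1)
  next
    assume "e A \<le> e B"
    then have "e (A \<union> B) = e B" using hom A B by (simp add: sup.absorb2)
    then have "A \<union> B = B" using inj unD[OF A B] B by (auto dest: inj_onD)
    then show "A \<subseteq> B" by auto
  qed
  define \<iota> where "\<iota> A = {x \<in> P0. f x \<le> e A}" for A
  have iD: "\<iota> A \<in> Down P0 r0" for A
    unfolding Down_def downset_def \<iota>_def
  proof (safe)
    fix x y assume "(x,y) \<in> r0" "y \<in> P0" "f y \<le> e A"
    moreover have "x \<in> P0" using pf(1) \<open>(x,y) \<in> r0\<close> by auto
    ultimately show "x \<in> P0" "f x \<le> e A"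
      using iso unfolding isotone_on_def by (auto intro: order_trans)
  qed
  have imono: "\<iota> A \<subseteq> \<iota> B" if "A \<in> Down P0 r0" "B \<in> Down P0 r0" "A \<subseteq> B" for A B
    using emb[OF that(1,2)] that(3) unfolding \<iota>_def by (auto intro: order_trans)
  have P0D: "P0 \<in> Down P0 r0" unfolding Down_def downset_def using pf(1) by auto
  define J where "J = \<Inter>{A \<in> Down P0 r0. \<iota> A \<subseteq> A}"
  have JD: "J \<in> Down P0 r0"
    unfolding Down_def downset_def mem_Collect_eq
  proof (intro conjI allI impI)
    have "P0 \<in> {A \<in> Down P0 r0. \<iota> A \<subseteq> A}" using P0D unfolding \<iota>_def by auto
    then show "J \<subseteq> P0" unfolding J_def by (rule Inter_lower)
  next
    fix x y assume xy: "(x, y) \<in> r0 \<and> y \<in> J"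
    show "x \<in> J" unfolding J_def
    proof (rule InterI)
      fix A assume "A \<in> {A \<in> Down P0 r0. \<iota> A \<subseteq> A}"
      moreover have "y \<in> J" using xy by simp
      ultimately have "downset P0 r0 A" "y \<in> A" unfolding J_def Down_def by auto
      then show "x \<in> A" using xy unfolding downset_def by blast
    qed
  qed
  have iJ: "\<iota> J \<subseteq> J"
  proof -
    have "\<iota> J \<subseteq> A" if "A \<in> Down P0 r0" "\<iota> A \<subseteq> A" for A
    proof -
      have "J \<subseteq> A" unfolding J_def using that by auto
      then show ?thesis using imono[OF JD that(1)] that(2) by auto
    qed
    then show ?thesis unfolding J_def by blast
  qed
  obtain S where S: "finite S" "S \<noteq> {}" "S \<subseteq> P0" "\<forall>s\<in>S. f s \<le> e J"
      "\<forall>u. (\<forall>s\<in>S. f s \<le> u) \<longrightarrow> e J \<le> u"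
    using gen_code[of "e J" f P0] gen by auto
  have SJ: "S \<subseteq> J" using S(3,4) iJ unfolding \<iota>_def by auto
  define Z where "Z = {A \<in> Down P0 r0. A \<subseteq> \<iota> A \<and> \<not> S \<subseteq> A}"
  have "\<forall>C\<in>chains Z. \<Union>C \<in> Z"
  proof
    fix C assume C: "C \<in> chains Z"
    then have CZ: "C \<subseteq> Z" and ch: "subset.chain UNIV C"
      by (auto simp: chains_alt_def subset.chain_def)
    have UD: "\<Union>C \<in> Down P0 r0" using CZ unfolding Z_def Down_def downset_def by blast
    have "\<Union>C \<subseteq> \<iota> (\<Union>C)"
    proof
      fix x assume "x \<in> \<Union>C"
      then obtain A where "A \<in> C" "x \<in> A" by auto
      then have "A \<in> Down P0 r0" "A \<subseteq> \<iota> A" using CZ unfolding Z_def by auto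
      then show "x \<in> \<iota> (\<Union>C)" using imono[OF _ UD, of A] \<open>A \<in> C\<close> \<open>x \<in> A\<close> by blast
    qed
    moreover have "\<not> S \<subseteq> \<Union>C"
    proof
      assume SC: "S \<subseteq> \<Union>C"
      then have "C \<noteq> {}" using S(2) by auto
      then obtain B where "B \<in> C" "S \<subseteq> B" using finite_subset_Union_chain[OF S(1) SC _ ch] by blast
      then show False using CZ unfolding Z_def by auto
    qed
    ultimately show "\<Union>C \<in> Z" unfolding Z_def using UD by auto
  qed
  then obtain M where M: "M \<in> Z" "\<forall>X\<in>Z. M \<subseteq> X \<longrightarrow> X = M" using Zorn_Lemma by blast
  have MD: "M \<in> Down P0 r0" and MM: "M \<subseteq> \<iota> M" and SM: "\<not> S \<subseteq> M" using M(1) unfolding Z_def by auto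
  have "\<not> S \<subseteq> \<iota> M"
  proof
    assume "S \<subseteq> \<iota> M"
    then have "e J \<le> e M" using S(5) unfolding \<iota>_def by auto
    then have "J \<subseteq> M" using emb[OF JD MD] by simp
    then show False using SJ SM by auto
  qed
  moreover have "\<iota> M \<subseteq> \<iota> (\<iota> M)" using imono[OF MD iD MM] .
  ultimately have "\<iota> M \<in> Z" unfolding Z_def using iD by auto
  then have "\<iota> M = M" using M(2) MM by auto
  then have "J \<subseteq> M" unfolding J_def using MD by auto
  then show False using SJ SM by auto
qed

theorem corollary3p2:
  shows "(\<forall>(P :: 'a set) r P0 (f :: 'a \<Rightarrow> 'a set).
            partial_order_on P r \<and> P0 \<subseteq> P \<and>
            isotone_on P0 r (\<subseteq>) f \<and> f ` P0 \<subseteq> Down P r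
            \<longrightarrow> f ` P0 \<noteq> Down P r)
       \<and> (\<forall>(P0 :: 'c set) r0 (e :: 'c set \<Rightarrow> 'b::semilattice_sup) (f :: 'c \<Rightarrow> 'b).
            partial_order_on P0 r0 \<and>
            inj_on e (Down P0 r0) \<and>
            (\<forall>A\<in>Down P0 r0. \<forall>B\<in>Down P0 r0. e (A \<union> B) = sup (e A) (e B)) \<and>
            isotone_on P0 r0 (\<le>) f
            \<longrightarrow> sup_generated (f ` P0) \<noteq> UNIV)"
proof (intro conjI allI impI)
  fix P :: "'a set" and r P0 and f :: "'a \<Rightarrow> 'a set"
  assume "partial_order_on P r \<and> P0 \<subseteq> P \<and> isotone_on P0 r (\<subseteq>) f \<and> f ` P0 \<subseteq> Down P r"
  then show "f ` P0 \<noteq> Down P r" using part1 by metis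
next
  fix P0 :: "'c set" and r0 and e :: "'c set \<Rightarrow> 'b::semilattice_sup" and f :: "'c \<Rightarrow> 'b"
  assume "partial_order_on P0 r0 \<and> inj_on e (Down P0 r0) \<and>
            (\<forall>A\<in>Down P0 r0. \<forall>B\<in>Down P0 r0. e (A \<union> B) = sup (e A) (e B)) \<and>
            isotone_on P0 r0 (\<le>) f"
  then show "sup_generated (f ` P0) \<noteq> UNIV" using part2 by metis
qed

end
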